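(* Let $M\in L^1(0,1)$ with $M\ge0$ a.e., and let $$Q=\Big\{u\in\mathcal C^1([0,1]):\ |u'(t)-u'(s)|\le\int_s^tM(r)\,dr\ \text{whenever }0\le s\le t\le1\Big\}.$$ Then $Q$ is closed in $\mathcal C([0,1])$ with the maximum norm topology. Moreover, if $u_n\in Q$ for all $n\in\mathbb N$ and $u_n\to u$ uniformly on $[0,1]$, then some subsequence $\{u_{n_k}\}$ converges to $u$ in the $\mathcal C^1$ norm. *)

theory Defs
  imports "HOL-Analysis.Analysis"
begin

definition C1_on01 :: "(real \<Rightarrow> real) \<Rightarrow> (real \<Rightarrow> real) \<Rightarrow> bool" where
  "C1_on01 u u' \<longleftrightarrow>
     (\<forall>t\<in>{0..1}. (u has_real_derivative u' t) (at t within {0..1})) \<and> continuous_on {0..1} u'"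

definition Qset :: "(real \<Rightarrow> real) \<Rightarrow> (real \<Rightarrow> real) set" where
  "Qset M = {u. \<exists>u'. C1_on01 u u' \<and>
      (\<forall>s t. 0 \<le> s \<and> s \<le> t \<and> t \<le> 1 \<longrightarrow> \<bar>u' t - u' s\<bar> \<le> (LINT r:{s..t}|lborel. M r))}"

(* C([0,1]) with the maximum norm (functions are represented extensionally on [0,1]) *)
definition C01 :: "(real \<Rightarrow> real) metric" where
  "C01 = cfunspace (top_of_set {0..1}) euclidean_metric"

end

theory Submission
  imports Defs "HOL-Complex_Analysis.Great_Picard"
begin

lemma main_seq:
  fixes M :: "real \<Rightarrow> real" and us vs :: "nat \<Rightarrow> real \<Rightarrow> real" and u :: "real \<Rightarrow> real"
  assumes int: "set_integrable lborel {0..1} M"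
    and C1: "\<And>n. C1_on01 (us n) (vs n)"
    and ineq: "\<And>n s t. 0 \<le> s \<Longrightarrow> s \<le> t \<Longrightarrow> t \<le> 1 \<Longrightarrow> \<bar>vs n t - vs n s\<bar> \<le> (LINT r:{s..t}|lborel. M r)"
    and ul: "uniform_limit {0..1} us u sequentially"
  shows "\<exists>r g. strict_mono r \<and> C1_on01 u g \<and> uniform_limit {0..1} (\<lambda>k. vs (r k)) g sequentially"
proof -
  define F where "F x = integral {0..x} M" for x
  have Mint: "M integrable_on {0..1}" using set_borel_integral_eq_integral(1)[OF int] .
  have LF: "(LINT r:{s..t}|lborel. M r) = F t - F s" if "0 \<le> s" "s \<le> t" "t \<le> 1" for s t
  proof -
    have "set_integrable lborel {s..t} M"
      by (rule set_integrable_subset[OF int]) (use that in auto)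
    then have "(LINT r:{s..t}|lborel. M r) = integral {s..t} M"
      by (rule set_borel_integral_eq_integral(2))
    moreover have "M integrable_on {0..t}"
      by (rule integrable_on_subinterval[OF Mint]) (use that in auto)
    then have "integral {0..s} M + integral {s..t} M = integral {0..t} M"
      using Henstock_Kurzweil_Integration.integral_combine[of 0 s t M] that by auto
    ultimately show ?thesis unfolding F_def by simp
  qed
  have Fc: "continuous_on {0..1} F"
    unfolding F_def by (rule indefinite_integral_continuous_1[OF Mint])
  have vdiff: "\<bar>vs n x - vs n y\<bar> \<le> \<bar>F x - F y\<bar>" if "x \<in> {0..1}" "y \<in> {0..1}" for n x y
  proof (cases "x \<le> y")
    case True
    then show ?thesis using ineq[of x y n] LF[of x y] that by auto
  next
    case False
    then show ?thesis using ineq[of y x n] LF[of y x] that by auto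
  qed
  have "bounded (F ` {0..1})"
    by (rule compact_imp_bounded[OF compact_continuous_image[OF Fc]]) simp
  then obtain D where "\<forall>x\<in>F ` {0..1}. norm x \<le> D"
    unfolding bounded_iff by blast
  then have D: "\<And>x. x \<in> {0..1} \<Longrightarrow> \<bar>F x\<bar> \<le> D" by auto
  have pw: "(\<lambda>n. us n x) \<longlonglongrightarrow> u x" if "x \<in> {0..1}" for x
    using tendsto_uniform_limitI[OF ul that] .
  have "(\<lambda>n. us n 1 - us n 0) \<longlonglongrightarrow> u 1 - u 0"
    using pw[of 1] pw[of 0] by (auto intro: tendsto_diff)
  then have "Bseq (\<lambda>n. us n 1 - us n 0)"
    using convergent_imp_Bseq convergent_def by blast
  then obtain K where K0: "\<forall>n. norm (us n 1 - us n 0) \<le> K"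
    using BseqE by blast
  then have K: "\<And>n. \<bar>us n 1 - us n 0\<bar> \<le> K" by simp
  have der: "((us n) has_derivative (*) (vs n x)) (at x within {0..1})" if "x \<in> {0..1}" for n x
    using C1[of n] that unfolding C1_on01_def has_field_derivative_def by auto
  have bnd: "norm (vs n x) \<le> K + 2 * D" if "x \<in> {0..1}" for n x
  proof -
    obtain \<xi> where \<xi>: "\<xi> \<in> {0..1}" "us n 1 - us n 0 = vs n \<xi> * (1 - 0)"
      using mvt_very_simple[of 0 1 "us n" "\<lambda>x. (*) (vs n x)"] der by auto
    have "\<bar>vs n x - vs n \<xi>\<bar> \<le> \<bar>F x - F \<xi>\<bar>" using vdiff \<xi> that by auto
    moreover have "\<bar>F x - F \<xi>\<bar> \<le> 2 * D" using D[of x] D[of \<xi>] \<xi> that by auto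
    moreover have "\<bar>vs n \<xi>\<bar> \<le> K" using K[of n] \<xi> by auto
    ultimately show ?thesis by auto
  qed
  have equi: "\<exists>d. 0 < d \<and> (\<forall>n y. y \<in> {0..1} \<and> norm (x - y) < d \<longrightarrow> norm (vs n x - vs n y) < e)"
    if xS: "x \<in> {0..1}" and e0: "0 < e" for x e
  proof -
    obtain d where d: "d > 0" "\<And>x'. x' \<in> {0..1} \<Longrightarrow> dist x' x < d \<Longrightarrow> dist (F x') (F x) < e"
      using Fc xS e0 unfolding continuous_on_iff by meson
    show ?thesis
    proof (intro exI[of _ d] conjI allI impI)
      fix n y assume yy: "y \<in> {0..1} \<and> norm (x - y) < d"
      have "dist y x < d" using yy by (simp add: dist_real_def abs_minus_commute)
      then have "dist (F y) (F x) < e" using d(2) yy by blast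
      then have "\<bar>F x - F y\<bar> < e" by (simp add: dist_real_def abs_minus_commute)
      then show "norm (vs n x - vs n y) < e" using vdiff[of x y n] xS yy by auto
    qed (use d in auto)
  qed
  obtain g k where gc: "continuous_on {0..1} g" and k: "strict_mono (k :: nat \<Rightarrow> nat)"
     and gk: "\<And>e. 0 < e \<Longrightarrow> \<exists>N. \<forall>n x. n \<ge> N \<and> x \<in> {0..1} \<longrightarrow> norm (vs (k n) x - g x) < e"
    using Arzela_Ascoli[of "{0..1}" vs "K + 2 * D"] bnd equi by blast
  have ulg: "uniform_limit {0..1} (\<lambda>n. vs (k n)) g sequentially"
    unfolding uniform_limit_sequentially_iff dist_real_def
    using gk by (metis real_norm_def)
  have "\<exists>G. \<forall>x\<in>{0..1}. (\<lambda>n. us (k n) x) \<longlonglongrightarrow> G x \<and> (G has_derivative (*) (g x)) (at x within {0..1})"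
  proof (rule has_derivative_sequence[where f' = "\<lambda>n x. (*) (vs (k n) x)"])
    show "convex {0..1::real}" by simp
    show "((us (k n)) has_derivative (*) (vs (k n) x)) (at x within {0..1})" if "x \<in> {0..1}" for n x
      using der that by auto
    show "\<forall>\<^sub>F n in sequentially. \<forall>x\<in>{0..1}. \<forall>h. norm (vs (k n) x * h - g x * h) \<le> e * norm h"
      if e0: "e > 0" for e
    proof -
      obtain N where N: "\<And>n x. n \<ge> N \<Longrightarrow> x \<in> {0..1} \<Longrightarrow> norm (vs (k n) x - g x) < e"
        using gk[OF e0] by blast
      show ?thesis
        unfolding eventually_sequentially
      proof (intro exI[of _ N] allI impI ballI)
        fix n x h assume "N \<le> n" "x \<in> {0..(1::real)}"
        then have "\<bar>vs (k n) x - g x\<bar> \<le> e" using N by (auto intro: less_imp_le)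
        then have "\<bar>vs (k n) x - g x\<bar> * \<bar>h\<bar> \<le> e * \<bar>h\<bar>" by (simp add: mult_right_mono)
        then show "norm (vs (k n) x * h - g x * h) \<le> e * norm h"
          by (simp add: left_diff_distrib[symmetric] abs_mult)
      qed
    qed
    show "(0::real) \<in> {0..1}" by simp
    show "(\<lambda>n. us (k n) 0) \<longlonglongrightarrow> u 0"
      using LIMSEQ_subseq_LIMSEQ[OF pw[of 0] k] by (simp add: o_def)
  qed
  then obtain G where G: "\<And>x. x \<in> {0..1} \<Longrightarrow> (\<lambda>n. us (k n) x) \<longlonglongrightarrow> G x"
    "\<And>x. x \<in> {0..1} \<Longrightarrow> (G has_derivative (*) (g x)) (at x within {0..1})"
    by blast
  have GU: "u x = G x" if "x \<in> {0..1}" for x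
  proof -
    have "(\<lambda>n. us (k n) x) \<longlonglongrightarrow> u x"
      using LIMSEQ_subseq_LIMSEQ[OF pw[OF that] k] by (simp add: o_def)
    then show ?thesis using G(1)[OF that] LIMSEQ_unique by blast
  qed
  have "C1_on01 u g"
    unfolding C1_on01_def has_field_derivative_def
    using has_derivative_transform[OF _ GU G(2)] gc by blast
  then show ?thesis using k ulg by blast
qed

lemma restrict_Qset:
  assumes "u \<in> Qset M"
  shows "restrict u {0..1} \<in> Qset M"
proof -
  obtain v where C: "C1_on01 u v" and I: "\<forall>s t. 0 \<le> s \<and> s \<le> t \<and> t \<le> 1 \<longrightarrow> \<bar>v t - v s\<bar> \<le> (LINT r:{s..t}|lborel. M r)"
    using assms unfolding Qset_def by blast
  have "C1_on01 (restrict u {0..1}) v"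
    unfolding C1_on01_def has_field_derivative_def
  proof (intro conjI ballI)
    fix t :: real assume t: "t \<in> {0..1}"
    show "(restrict u {0..1} has_derivative (*) (v t)) (at t within {0..1})"
      by (rule has_derivative_transform[OF t _ C[unfolded C1_on01_def has_field_derivative_def, THEN conjunct1, rule_format, OF t]]) simp
  qed (use C in \<open>auto simp: C1_on01_def\<close>)
  then show ?thesis using I unfolding Qset_def by blast
qed

lemma Qset_choice:
  assumes "\<forall>n. us n \<in> Qset M"
  obtains vs where "\<And>n. C1_on01 (us n) (vs n)"
    "\<And>n s t. 0 \<le> s \<Longrightarrow> s \<le> t \<Longrightarrow> t \<le> 1 \<Longrightarrow> \<bar>vs n t - vs n s\<bar> \<le> (LINT r:{s..t}|lborel. M r)"
proof -
  have "\<forall>n. \<exists>v. C1_on01 (us n) v \<and> (\<forall>s t. 0 \<le> s \<and> s \<le> t \<and> t \<le> 1 \<longrightarrow> \<bar>v t - v s\<bar> \<le> (LINT r:{s..t}|lborel. M r))"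
    using assms unfolding Qset_def by blast
  then obtain vs where "\<forall>n. C1_on01 (us n) (vs n) \<and> (\<forall>s t. 0 \<le> s \<and> s \<le> t \<and> t \<le> 1 \<longrightarrow> \<bar>vs n t - vs n s\<bar> \<le> (LINT r:{s..t}|lborel. M r))"
    by metis
  then show ?thesis using that by blast
qed

lemma part2:
  fixes M :: "real \<Rightarrow> real"
  assumes int: "set_integrable lborel {0..1} M"
    and us: "\<forall>n. us n \<in> Qset M" and ul: "uniform_limit {0..1} us u sequentially"
  shows "\<exists>r u' us'. strict_mono r \<and> C1_on01 u u' \<and> (\<forall>n. C1_on01 (us n) (us' n)) \<and>
             uniform_limit {0..1} (\<lambda>k. us (r k)) u sequentially \<and>
             uniform_limit {0..1} (\<lambda>k. us' (r k)) u' sequentially"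
proof -
  obtain vs where C: "\<And>n. C1_on01 (us n) (vs n)"
    and I: "\<And>n s t. 0 \<le> s \<Longrightarrow> s \<le> t \<Longrightarrow> t \<le> 1 \<Longrightarrow> \<bar>vs n t - vs n s\<bar> \<le> (LINT r:{s..t}|lborel. M r)"
    using Qset_choice[OF us] by blast
  obtain r g where r: "strict_mono r" "C1_on01 u g" "uniform_limit {0..1} (\<lambda>k. vs (r k)) g sequentially"
    using main_seq[OF int C I ul] by blast
  have "uniform_limit {0..1} (\<lambda>k. us (r k)) u sequentially"
    using filterlim_compose[OF ul filterlim_subseq[OF r(1)]] .
  then show ?thesis using r C by blast
qed

lemma part1:
  fixes M :: "real \<Rightarrow> real"
  assumes int: "set_integrable lborel {0..1} M"
  shows "closedin (mtopology_of C01) ((\<lambda>u. restrict u {0..1}) ` Qset M)"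
proof -
  interpret Ms: Metric_space "mspace C01" "mdist C01" by (rule Metric_space_mspace_mdist)
  have top: "topspace (top_of_set {0..1::real}) = {0..1}" by simp
  have cpt: "compactin (top_of_set {0..1::real}) (topspace (top_of_set {0..1::real}))"
    by (simp add: compactin_subtopology compactin_euclidean_iff)
  have msp: "mspace C01 = {f. f \<in> extensional {0..1} \<and> continuous_on {0..1} f}"
    unfolding C01_def using compactin_mspace_cfunspace[OF cpt, of euclidean_metric]
    by (simp add: continuous_map_iff_continuous)
  have Qsub: "restrict u {0..1} \<in> mspace C01" if uQ: "u \<in> Qset M" for u
  proof -
    obtain v where C: "C1_on01 u v" using uQ unfolding Qset_def by blast
    have "continuous_on {0..1} u"
      unfolding continuous_on_eq_continuous_within
      using C DERIV_continuous unfolding C1_on01_def by blast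
    then have "continuous_on {0..1} (restrict u {0..1})"
      by (rule continuous_on_eq) simp
    then show ?thesis unfolding msp by simp
  qed
  show ?thesis
    unfolding mtopology_of_def Ms.metric_closedin_iff_sequentially_closed
  proof (intro conjI allI impI)
    show "(\<lambda>u. restrict u {0..1}) ` Qset M \<subseteq> mspace C01" using Qsub by blast
    fix \<sigma> l
    assume a: "range \<sigma> \<subseteq> (\<lambda>u. restrict u {0..1}) ` Qset M \<and> limitin Ms.mtopology \<sigma> l sequentially"
    have sQ: "\<forall>n. \<sigma> n \<in> Qset M"
    proof
      fix n
      have "\<sigma> n \<in> (\<lambda>u. restrict u {0..1}) ` Qset M" using a by (meson rangeI subsetD)
      then obtain u where "u \<in> Qset M" "\<sigma> n = restrict u {0..1}" by (auto simp del: restrict_apply)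
      then show "\<sigma> n \<in> Qset M" using restrict_Qset by metis
    qed
    have lim: "l \<in> mspace C01 \<and> (\<forall>\<epsilon>>0. \<exists>N. \<forall>n\<ge>N. \<sigma> n \<in> mspace C01 \<and> mdist C01 (\<sigma> n) l < \<epsilon>)"
      using a Ms.limit_metric_sequentially by blast
    have ul: "uniform_limit {0..1} \<sigma> l sequentially"
      unfolding uniform_limit_sequentially_iff
    proof (intro allI impI)
      fix e :: real assume "e > 0"
      then obtain N where N: "\<And>n. n \<ge> N \<Longrightarrow> \<sigma> n \<in> mspace C01 \<and> mdist C01 (\<sigma> n) l < e"
        using lim by blast
      show "\<exists>N. \<forall>n\<ge>N. \<forall>x\<in>{0..1}. dist (\<sigma> n x) (l x) < e"
      proof (intro exI[of _ N] allI impI ballI)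
        fix n x assume "N \<le> n" "x \<in> {0..(1::real)}"
        then show "dist (\<sigma> n x) (l x) < e"
          using cfunspace_mdist_lt[OF cpt, of "\<sigma> n" euclidean_metric l e x] N[of n] lim
          unfolding C01_def by simp
      qed
    qed
    obtain vs where C: "\<And>n. C1_on01 (\<sigma> n) (vs n)"
      and I: "\<And>n s t. 0 \<le> s \<Longrightarrow> s \<le> t \<Longrightarrow> t \<le> 1 \<Longrightarrow> \<bar>vs n t - vs n s\<bar> \<le> (LINT r:{s..t}|lborel. M r)"
      using Qset_choice[OF sQ] by blast
    obtain r g where r: "strict_mono r" "C1_on01 l g" "uniform_limit {0..1} (\<lambda>k. vs (r k)) g sequentially"
      using main_seq[OF int C I ul] by blast
    have gI: "\<bar>g t - g s\<bar> \<le> (LINT r:{s..t}|lborel. M r)" if "0 \<le> s" "s \<le> t" "t \<le> 1" for s t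
    proof -
      have "(\<lambda>k. \<bar>vs (r k) t - vs (r k) s\<bar>) \<longlonglongrightarrow> \<bar>g t - g s\<bar>"
        using tendsto_uniform_limitI[OF r(3), of t] tendsto_uniform_limitI[OF r(3), of s] that
        by (auto intro!: tendsto_intros)
      then show ?thesis
        by (rule LIMSEQ_le_const2) (use I that in auto)
    qed
    have "l \<in> Qset M" unfolding Qset_def
      by (intro CollectI exI[of _ g] conjI r(2) allI impI gI) auto
    moreover have "restrict l {0..1} = l" using lim msp extensional_restrict by auto
    ultimately show "l \<in> (\<lambda>u. restrict u {0..1}) ` Qset M" by (metis image_eqI)
  qed
qed

theorem lemma5:
  fixes M :: "real \<Rightarrow> real"
  assumes "set_integrable lborel {0..1} M"
    and "AE r in lborel. r \<in> {0..1} \<longrightarrow> 0 \<le> M r"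
  shows "closedin (mtopology_of C01) ((\<lambda>u. restrict u {0..1}) ` Qset M)
    \<and> (\<forall>(us :: nat \<Rightarrow> real \<Rightarrow> real) (u :: real \<Rightarrow> real).
          (\<forall>n. us n \<in> Qset M) \<and> uniform_limit {0..1} us u sequentially \<longrightarrow>
          (\<exists>r u' us'. strict_mono r \<and> C1_on01 u u' \<and> (\<forall>n. C1_on01 (us n) (us' n)) \<and>
             uniform_limit {0..1} (\<lambda>k. us (r k)) u sequentially \<and>
             uniform_limit {0..1} (\<lambda>k. us' (r k)) u' sequentially))"
proof (intro conjI allI impI)
  show "closedin (mtopology_of C01) ((\<lambda>u. restrict u {0..1}) ` Qset M)"
    by (rule part1[OF assms(1)])
  fix us :: "nat \<Rightarrow> real \<Rightarrow> real" and u :: "real \<Rightarrow> real"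
  assume h: "(\<forall>n. us n \<in> Qset M) \<and> uniform_limit {0..1} us u sequentially"
  show "\<exists>r u' us'. strict_mono r \<and> C1_on01 u u' \<and> (\<forall>n. C1_on01 (us n) (us' n)) \<and>
             uniform_limit {0..1} (\<lambda>k. us (r k)) u sequentially \<and>
             uniform_limit {0..1} (\<lambda>k. us' (r k)) u' sequentially"
    by (rule part2[OF assms(1)]) (use h in simp_all)
qed

end
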